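(* Consider the universal Dealer $\mathcal D_{\mathrm{universal}}$ with parameters $k_i$, $\ell_i$, $u_i$, $d$ as below. For every epoch $i\in[d]$, the expected number of correct guesses that any Guesser makes during the $i$-th epoch is at most $\ln(\log n+3)$.
   Context: Card guessing game: a deck of $n$ distinct cards labeled $1,\dots,n$; $n$ turns; in each turn the Dealer selects a card from the remaining deck and places it face down, the Guesser names a card of $[n]$, and the card is revealed and discarded. A guess is correct if it equals the drawn card. The Guesser may be arbitrary (any memory, randomness and computation). The universal Dealer (rounding ignored): let $d=\log_{\log n}\big(n/(8e\log^6 n)\big)$, and for $i\in[d]$ let $k_i=n/(8e\log^{1+i} n)$, $\ell_i=k_i(1-1/\log n)$, $u_i=2\ell_i/\log^2 n$. (1) While more than $k_1$ cards remain it draws uniformly random cards from the remaining deck; (2) the $i$-th epoch consists of the $\ell_i$ turns starting when $k_i$ cards remain; at the start of each epoch a set $B$ is set to $\emptyset$; in each turn of the epoch the Dealer draws a uniformly random card of (remaining deck)$\setminus B$, and after the Guesser's guess $g$, if $g$ is still in the remaining deck and $|B|<u_i$, then $g$ is added to $B$; (3) when $\log^4 n$ cards remain it draws uniformly random cards from the remaining deck until the end. Expectations are over the randomness of both players. $\log$ is base 2, $\ln$ natural. *)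

theory Defs
  imports "HOL-Probability.Probability"
begin

text \<open>Parameters of the universal Dealer (log is base 2). Rounding is ignored by
  keeping all thresholds real-valued and comparing the (natural) number of
  remaining cards against them.\<close>

definition LL :: "nat \<Rightarrow> real" where
  "LL n = log 2 (real n)"

definition dd :: "nat \<Rightarrow> real" where
  "dd n = log (LL n) (real n / (8 * exp 1 * LL n ^ 6))"

definition kk :: "nat \<Rightarrow> nat \<Rightarrow> real" where
  "kk n i = real n / (8 * exp 1 * LL n ^ (1 + i))"

definition ll :: "nat \<Rightarrow> nat \<Rightarrow> real" where
  "ll n i = kk n i * (1 - 1 / LL n)"

definition uu :: "nat \<Rightarrow> nat \<Rightarrow> real" where
  "uu n i = 2 * ll n i / LL n ^ 2"

text \<open>A turn played when m cards remain belongs to epoch i (i in [d]) iff it is one of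
  the ell_i turns starting when k_i cards remain, i.e. k_i - ell_i < m <= k_i.\<close>

definition in_epoch :: "nat \<Rightarrow> nat \<Rightarrow> nat \<Rightarrow> bool" where
  "in_epoch n i m \<longleftrightarrow> 1 \<le> i \<and> real i \<le> dd n \<and> kk n i - ll n i < real m \<and> real m \<le> kk n i"

definition epoch_of :: "nat \<Rightarrow> nat \<Rightarrow> nat option" where
  "epoch_of n m = (if \<exists>i. in_epoch n i m then Some (SOME i. in_epoch n i m) else None)"

text \<open>Inside an epoch: uniform over deck - B
  (the fallback when deck - B is empty never occurs in an epoch).\<close>

definition dealer_draw :: "nat \<Rightarrow> nat set \<Rightarrow> nat set \<Rightarrow> nat pmf" where
  "dealer_draw n deck B = (case epoch_of n (card deck) of
      None \<Rightarrow> pmf_of_set deck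
    | Some i \<Rightarrow> (if deck - B = {} then pmf_of_set deck else pmf_of_set (deck - B)))"

text \<open>A Guesser with arbitrary memory type 's is given by an initial
  (random) memory state, a randomized guessing rule gs (producing a guess and new
  memory), and a randomized observation rule obs (updating memory after the card is
  revealed). State: remaining deck, set B, the epoch
  of the previous turn (to reset B at the start of each epoch), Guesser memory.\<close>

fun run :: "nat \<Rightarrow> nat \<Rightarrow> ('s \<Rightarrow> (nat \<times> 's) pmf) \<Rightarrow> ('s \<Rightarrow> nat \<Rightarrow> 's pmf) \<Rightarrow>
    nat \<Rightarrow> nat set \<Rightarrow> nat set \<Rightarrow> nat option \<Rightarrow> 's \<Rightarrow> nat pmf" where
  "run n i gs obs 0 deck B eB s = return_pmf 0"
| "run n i gs obs (Suc t) deck B eB s =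
    (let e = epoch_of n (card deck);
         B0 = (if e = eB then B else {})
     in bind_pmf (dealer_draw n deck B0) (\<lambda>c.
        bind_pmf (gs s) (\<lambda>(g, s1).
        bind_pmf (obs s1 c) (\<lambda>s2.
        let deck' = deck - {c};
            B1 = (case e of None \<Rightarrow> {}
                  | Some j \<Rightarrow> (if g \<in> deck' \<and> real (card B0) < uu n j then insert g B0 else B0))
        in map_pmf (\<lambda>r. r + (if e = Some i \<and> g = c then 1 else 0))
             (run n i gs obs t deck' B1 e s2)))))"

definition correct_in_epoch :: "nat \<Rightarrow> nat \<Rightarrow> 's pmf \<Rightarrow> ('s \<Rightarrow> (nat \<times> 's) pmf) \<Rightarrow>
    ('s \<Rightarrow> nat \<Rightarrow> 's pmf) \<Rightarrow> nat pmf" where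
  "correct_in_epoch n i init gs obs = bind_pmf init (\<lambda>s. run n i gs obs n {1..n} {} None s)"

end

theory Submission
  imports Defs
begin


lemma epoch_of_SomeD: "epoch_of n m = Some i \<Longrightarrow> in_epoch n i m"
  unfolding epoch_of_def by (metis option.distinct(1) option.inject someI_ex)

lemma run_bound:
  fixes gs :: "'s \<Rightarrow> (nat \<times> 's) pmf" and obs :: "'s \<Rightarrow> nat \<Rightarrow> 's pmf"
  assumes u0: "0 < uu n i + 1"
    and pos: "\<And>m. epoch_of n m = Some i \<Longrightarrow> real m - uu n i - 1 > 0"
  shows "finite deck \<Longrightarrow> card deck = t \<Longrightarrow> finite B \<Longrightarrow> (eB = Some i \<longrightarrow> real (card B) < uu n i + 1) \<Longrightarrow>
    (\<integral>\<^sup>+r. ennreal (real r) \<partial>measure_pmf (run n i gs obs t deck B eB s))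
      \<le> ennreal (\<Sum>m=1..t. if epoch_of n m = Some i then 1 / (real m - uu n i - 1) else 0)"
proof (induction t arbitrary: deck B eB s)
  case 0
  then show ?case by simp
next
  case (Suc t)
  define u where "u = uu n i"
  define e where "e = epoch_of n (card deck)"
  define B0 where "B0 = (if e = eB then B else {})"
  define D where "D = dealer_draw n deck B0"
  define B1 where "B1 g c = (case e of None \<Rightarrow> {} | Some j \<Rightarrow> (if g \<in> deck - {c} \<and> real (card B0) < uu n j then insert g B0 else B0))" for g c
  define F where "F = (\<Sum>m=1..t. if epoch_of n m = Some i then 1 / (real m - uu n i - 1) else 0)"
  define \<delta> where "\<delta> = (if e = Some i then 1 / (real (Suc t) - u - 1) else 0)"
  have F0: "F \<ge> 0" unfolding F_def using pos by (intro sum_nonneg) (auto simp: less_imp_le)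
  have d0: "\<delta> \<ge> 0" unfolding \<delta>_def u_def e_def using pos[of "Suc t"] Suc.prems(2) by auto
  have run_eq: "run n i gs obs (Suc t) deck B eB s = bind_pmf (gs s) (\<lambda>(g,s1). bind_pmf D (\<lambda>c.
     bind_pmf (obs s1 c) (\<lambda>s2. map_pmf (\<lambda>r. r + (if e = Some i \<and> g = c then 1 else 0))
       (run n i gs obs t (deck - {c}) (B1 g c) e s2))))"
    apply (simp only: run.simps Let_def)
    apply (subst bind_commute_pmf)
    unfolding B1_def D_def B0_def e_def by (simp add: case_prod_unfold)
  have ne: "deck \<noteq> {}" using Suc.prems by auto
  have setD: "set_pmf D \<subseteq> deck"
    unfolding D_def dealer_draw_def using ne Suc.prems(1)
    by (auto split: option.splits)
  have finB0: "finite B0" using Suc.prems(3) by (simp add: B0_def)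
  have card0: "e = Some i \<Longrightarrow> real (card B0) < u + 1"
    using Suc.prems(4) u0 by (auto simp: B0_def u_def)
  have pmfD: "pmf D g \<le> 1 / (real (Suc t) - u - 1)" if ei: "e = Some i" for g
  proof -
    have p: "real (Suc t) - u - 1 > 0" using pos[of "Suc t"] ei Suc.prems(2) by (simp add: e_def u_def)
    have "card deck - card B0 \<le> card (deck - B0)" by (rule diff_card_le_card_Diff[OF finB0])
    hence c1: "real (card (deck - B0)) \<ge> real (Suc t) - u - 1" using card0[OF ei] Suc.prems(2) by linarith
    hence nz: "deck - B0 \<noteq> {}" using p by (metis card.empty of_nat_0 not_less)
    have Deq: "D = pmf_of_set (deck - B0)" using ei nz unfolding D_def dealer_draw_def e_def by simp
    have "pmf D g \<le> 1 / real (card (deck - B0))"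
      unfolding Deq using nz Suc.prems(1) by (simp add: indicator_def)
    also have "\<dots> \<le> 1 / (real (Suc t) - u - 1)" using c1 p by (intro divide_left_mono) auto
    finally show ?thesis .
  qed
  have inner: "(\<integral>\<^sup>+r. ennreal (real r) \<partial>measure_pmf (map_pmf (\<lambda>r. r + (if e = Some i \<and> g = c then 1 else 0))
       (run n i gs obs t (deck - {c}) (B1 g c) e s2))) \<le> ennreal F + ennreal (if e = Some i \<and> g = c then 1 else 0)"
    if c: "c \<in> set_pmf D" for g c s2
  proof -
    have cd: "c \<in> deck" using c setD by auto
    have IH: "(\<integral>\<^sup>+r. ennreal (real r) \<partial>measure_pmf (run n i gs obs t (deck - {c}) (B1 g c) e s2)) \<le> ennreal F"
      unfolding F_def
    proof (rule Suc.IH)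
      show "finite (deck - {c})" using Suc.prems by auto
      show "card (deck - {c}) = t" using Suc.prems cd by auto
      show "finite (B1 g c)" using finB0 by (auto simp: B1_def split: option.splits)
      show "e = Some i \<longrightarrow> real (card (B1 g c)) < uu n i + 1"
        using card0 finB0 by (auto simp: B1_def u_def card_insert_if)
    qed
    have "(\<integral>\<^sup>+r. ennreal (real r) \<partial>measure_pmf (map_pmf (\<lambda>r. r + (if e = Some i \<and> g = c then 1 else 0))
       (run n i gs obs t (deck - {c}) (B1 g c) e s2))) =
       (\<integral>\<^sup>+r. ennreal (real r) + ennreal (if e = Some i \<and> g = c then 1 else 0) \<partial>measure_pmf (run n i gs obs t (deck - {c}) (B1 g c) e s2))"
      by (simp add: ennreal_plus[symmetric] del: ennreal_plus)
    also have "\<dots> = (\<integral>\<^sup>+r. ennreal (real r) \<partial>measure_pmf (run n i gs obs t (deck - {c}) (B1 g c) e s2)) + ennreal (if e = Some i \<and> g = c then 1 else 0)"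
      by (subst nn_integral_add) (auto simp: measure_pmf.emeasure_space_1)
    also have "\<dots> \<le> ennreal F + ennreal (if e = Some i \<and> g = c then 1 else 0)"
      using IH by (rule add_right_mono)
    finally show ?thesis .
  qed
  have step: "(\<integral>\<^sup>+c. (\<integral>\<^sup>+s2. (\<integral>\<^sup>+r. ennreal (real r) \<partial>measure_pmf (map_pmf (\<lambda>r. r + (if e = Some i \<and> g = c then 1 else 0))
       (run n i gs obs t (deck - {c}) (B1 g c) e s2))) \<partial>measure_pmf (obs s1 c)) \<partial>measure_pmf D) \<le> ennreal F + ennreal \<delta>"
    for g s1
  proof -
    have "(\<integral>\<^sup>+c. (\<integral>\<^sup>+s2. (\<integral>\<^sup>+r. ennreal (real r) \<partial>measure_pmf (map_pmf (\<lambda>r. r + (if e = Some i \<and> g = c then 1 else 0))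
       (run n i gs obs t (deck - {c}) (B1 g c) e s2))) \<partial>measure_pmf (obs s1 c)) \<partial>measure_pmf D)
      \<le> (\<integral>\<^sup>+c. (\<integral>\<^sup>+s2. ennreal F + ennreal (if e = Some i \<and> g = c then 1 else 0) \<partial>measure_pmf (obs s1 c)) \<partial>measure_pmf D)"
      apply (rule nn_integral_mono_AE)
      apply (subst AE_measure_pmf_iff)
      apply (intro ballI nn_integral_mono)
      apply (erule inner)
      done
    also have "\<dots> = (\<integral>\<^sup>+c. ennreal F + ennreal (if e = Some i \<and> g = c then 1 else 0) \<partial>measure_pmf D)"
      by (simp add: measure_pmf.emeasure_space_1)
    also have "\<dots> = ennreal F + (\<integral>\<^sup>+c. ennreal (if e = Some i \<and> g = c then 1 else 0) \<partial>measure_pmf D)"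
      by (subst nn_integral_add) (auto simp: measure_pmf.emeasure_space_1)
    also have "(\<integral>\<^sup>+c. ennreal (if e = Some i \<and> g = c then 1 else 0) \<partial>measure_pmf D) \<le> ennreal \<delta>"
    proof (cases "e = Some i")
      case True
      have "(\<integral>\<^sup>+c. ennreal (if e = Some i \<and> g = c then 1 else 0) \<partial>measure_pmf D) = (\<integral>\<^sup>+c. indicator {g} c \<partial>measure_pmf D)"
        using True by (intro nn_integral_cong) (auto simp: indicator_def)
      also have "\<dots> = ennreal (pmf D g)" by (simp add: emeasure_pmf_single)
      also have "\<dots> \<le> ennreal \<delta>" using pmfD[OF True] True unfolding \<delta>_def by (simp add: ennreal_leI)
      finally show ?thesis .
    next
      case False
      then show ?thesis by simp
    qed
    finally show ?thesis by (simp add: add_left_mono)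
  qed
  have "(\<integral>\<^sup>+r. ennreal (real r) \<partial>measure_pmf (run n i gs obs (Suc t) deck B eB s)) \<le> (\<integral>\<^sup>+x. ennreal F + ennreal \<delta> \<partial>measure_pmf (gs s))"
    unfolding run_eq nn_integral_bind_pmf
    apply (rule nn_integral_mono)
    apply (simp only: case_prod_beta nn_integral_bind_pmf)
    apply (rule step)
    done
  also have "\<dots> = ennreal (F + \<delta>)" using F0 d0 by (simp add: measure_pmf.emeasure_space_1 ennreal_plus)
  also have "F + \<delta> = (\<Sum>m=1..Suc t. if epoch_of n m = Some i then 1 / (real m - uu n i - 1) else 0)"
    unfolding F_def \<delta>_def e_def u_def using Suc.prems(2) by simp
  finally show ?case .
qed



lemma ln_step: fixes y :: real assumes "y > 1" shows "ln (y - 1) + 1 / y \<le> ln y"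
proof -
  have "ln ((y-1)/y) \<le> (y-1)/y - 1" by (rule ln_le_minus_one) (use assms in auto)
  also have "(y-1)/y - 1 = - 1/y" using assms by (simp add: field_simps)
  finally have "ln ((y-1)/y) \<le> -1/y" .
  moreover have "ln ((y-1)/y) = ln (y-1) - ln y" using assms by (simp add: ln_div)
  ultimately show ?thesis by simp
qed

lemma tele:
  fixes u a k :: real and P :: "nat \<Rightarrow> bool"
  assumes ac: "a - 2 - u > 0" and PI: "\<And>m. P m \<Longrightarrow> a < real m \<and> real m \<le> k"
  shows "(\<Sum>m=1..t. if P m then 1 / (real m - u - 1) else 0)
           \<le> ln (max (min (real t) k - u - 1) (a - 2 - u)) - ln (a - 2 - u)"
proof (induction t)
  case 0
  have "ln (a - 2 - u) \<le> ln (max (min (real 0) k - u - 1) (a - 2 - u))"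
    using ac by (intro ln_mono) auto
  then show ?case by simp
next
  case (Suc t)
  show ?case
  proof (cases "P (Suc t)")
    case True
    from PI[OF True] have h: "a < real t + 1" "real t + 1 \<le> k" by auto
    have m1: "max (min (real t) k - u - 1) (a - 2 - u) = real t - u - 1" using h by (simp add: max_def min_def)
    have m2: "max (min (real (Suc t)) k - u - 1) (a - 2 - u) = real t + 1 - u - 1" using h ac by (simp add: max_def min_def)
    have "ln (real t - u - 1) + 1 / (real t + 1 - u - 1) \<le> ln (real t + 1 - u - 1)"
      using ln_step[of "real t + 1 - u - 1"] h ac by simp
    then show ?thesis using Suc.IH True m1 m2 by simp
  next
    case False
    have "ln (max (min (real t) k - u - 1) (a - 2 - u)) \<le> ln (max (min (real (Suc t)) k - u - 1) (a - 2 - u))"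
      using ac by (intro ln_mono) (auto simp: max_def min_def)
    then show ?thesis using Suc.IH False by simp
  qed
qed

lemma params:
  assumes "1 \<le> i" "real i \<le> dd n"
  shows "LL n \<ge> 4" "kk n i - ll n i \<ge> LL n ^ 4"
proof -
  have n3: "n \<ge> 3"
  proof (rule ccontr)
    assume "\<not> n \<ge> 3"
    hence "n = 0 \<or> n = 1 \<or> n = 2" by auto
    hence "dd n = 0" by (auto simp: dd_def LL_def log_def)
    thus False using assms by simp
  qed
  define L where "L = LL n"
  have L1: "L > 1" unfolding L_def LL_def using n3 by (subst less_log_iff) auto
  define X where "X = real n / (8 * exp 1 * L ^ 6)"
  have X0: "X > 0" unfolding X_def using n3 L1 by auto
  have "real i \<le> log L X" using assms(2) by (simp add: dd_def X_def L_def)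
  hence "L powr real i \<le> X" using L1 X0 by (simp add: le_log_iff)
  hence LX: "L ^ i \<le> X" using L1 by (simp add: powr_realpow)
  hence nb: "8 * exp 1 * L ^ 6 * L ^ i \<le> real n" unfolding X_def using L1 by (simp add: field_simps)
  have "L ^ (6 + i) \<ge> 1" using L1 by (intro one_le_power) auto
  hence "L ^ 6 * L ^ i \<ge> 1" by (simp add: power_add)
  hence "real n \<ge> 8 * exp 1" using nb by (smt (verit) exp_gt_zero mult_le_cancel_left1 mult.assoc)
  hence "real n \<ge> 16" using exp_ge_add_one_self[of 1] by linarith
  hence "L \<ge> log 2 16" unfolding L_def LL_def by (intro log_mono) auto
  moreover have "log 2 (16::real) = 4" by (simp add: log_def ln_realpow[of 2 4, simplified] )
  ultimately show "LL n \<ge> 4" by (simp add: L_def)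
  have "kk n i - ll n i = real n / (8 * exp 1 * L ^ (2 + i))"
    unfolding kk_def ll_def L_def[symmetric] using L1 by (simp add: field_simps)
  also have "\<dots> \<ge> L ^ 4"
  proof -
    have e: "L ^ (2 + i) * L ^ 4 = L ^ 6 * L ^ i"
      by (metis power_add add.commute add.left_commute numeral_Bit0 numeral_Bit1 numeral_One one_add_one numeral_plus_numeral add_2_eq_Suc' semiring_norm(2) semiring_norm(4) semiring_norm(6) semiring_norm(7))
    have p: "8 * exp 1 * L ^ (2 + i) > 0" using L1 by auto
    have "L ^ 4 * (8 * exp 1 * L ^ (2 + i)) = 8 * exp 1 * (L ^ (2 + i) * L ^ 4)"
      by (simp only: mult.commute mult.left_commute mult.assoc)
    also have "\<dots> = 8 * exp 1 * L ^ 6 * L ^ i" unfolding e by (simp only: mult.assoc)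
    also have "\<dots> \<le> real n" by (rule nb)
    finally have "L ^ 4 * (8 * exp 1 * L ^ (2 + i)) \<le> real n" .
    thus ?thesis using p by (simp add: pos_le_divide_eq)
  qed
  finally show "kk n i - ll n i \<ge> LL n ^ 4" by (simp add: L_def)
qed



lemma realfacts:
  fixes L a u k :: real
  assumes L4: "L \<ge> 4" and aL: "a \<ge> L ^ 4" and k: "k = a * L" and u: "u = 2 * (a * (L - 1)) / L ^ 2"
  shows "u \<ge> 0" "a - 2 - u > 0" "k - u - 1 \<le> (L + 3) * (a - 2 - u)" "a \<le> k"
proof -
  have L0: "L > 0" using L4 by simp
  have "L ^ 4 \<ge> 4 ^ 4" using L4 by (intro power_mono) auto
  hence a0: "a \<ge> 256" using aL by simp
  have "L ^ 4 = L * L ^ 3" by (simp add: power_eq_if)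
  moreover have "L ^ 3 \<ge> 4 ^ 3" using L4 by (intro power_mono) auto
  hence "64 \<le> L ^ 3" by simp
  hence "L * 64 \<le> L * L ^ 3" using L0 by (intro mult_left_mono) auto
  ultimately have "L ^ 4 \<ge> 64 * L" by simp
  hence a1: "a \<ge> 64 * L" using aL by simp
  show "u \<ge> 0" unfolding u using L4 a0 by simp
  have uL: "u * L ^ 2 = 2 * a * (L - 1)" unfolding u using L0 by (simp add: field_simps)
  have "u * L ^ 2 \<le> (a / 2) * L ^ 2"
  proof -
    have "2 * a * (L - 1) \<le> (a / 2) * L ^ 2"
    proof -
      have "(a/2) * L^2 - 2 * a * (L - 1) = (a/2) * ((L - 2)^2)" by (simp add: power2_eq_square algebra_simps)
      also have "\<dots> \<ge> 0" using a0 by simp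
      finally show ?thesis by simp
    qed
    thus ?thesis using uL by simp
  qed
  hence ua: "u \<le> a / 2" using L0 by simp
  show "a - 2 - u > 0" using ua a0 by simp
  have "(L + 2) * u * L ^ 2 = (L + 2) * (2 * a * (L - 1))" using uL by (metis mult.assoc)
  also have "\<dots> = 2 * a * (L^2 + L - 2)" by (simp add: power2_eq_square algebra_simps)
  also have "\<dots> \<le> (2 * a + a / 2) * L ^ 2"
  proof -
    have "(2 * a + a / 2) * L ^ 2 - 2 * a * (L^2 + L - 2) = a * (L^2 / 2 - 2 * L + 4)" by (simp add: power2_eq_square algebra_simps)
    also have "L^2 / 2 - 2 * L + 4 = (L - 2)^2 / 2 + 2" by (simp add: power2_eq_square field_simps)
    also have "a * ((L - 2)^2 / 2 + 2) \<ge> 0" using a0 by (intro mult_nonneg_nonneg) auto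
    finally show ?thesis by simp
  qed
  finally have "(L + 2) * u \<le> 2 * a + a / 2" using L0 by simp
  thus "k - u - 1 \<le> (L + 3) * (a - 2 - u)" using a1 L4 unfolding k by (simp add: algebra_simps)
  show "a \<le> k" unfolding k using a0 L4 by simp
qed


theorem mainTheorem15:
  fixes n i :: nat
    and init :: "'s pmf"
    and gs :: "'s \<Rightarrow> (nat \<times> 's) pmf"
    and obs :: "'s \<Rightarrow> nat \<Rightarrow> 's pmf"
  assumes "1 \<le> i" and "real i \<le> dd n"
  shows "measure_pmf.expectation (correct_in_epoch n i init gs obs) real \<le> ln (LL n + 3)"
proof -
  define L where "L = LL n"
  define k where "k = kk n i"
  define a where "a = kk n i - ll n i"
  define u where "u = uu n i"
  have L4: "L \<ge> 4" using params(1)[OF assms] by (simp add: L_def)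
  have aL: "a \<ge> L ^ 4" using params(2)[OF assms] by (simp add: L_def a_def)
  have ka: "k = a * L" unfolding a_def k_def ll_def L_def[symmetric] using L4 by (simp add: field_simps)
  have ua: "u = 2 * (a * (L - 1)) / L ^ 2"
  proof -
    have "ll n i = a * (L - 1)" unfolding a_def ll_def L_def[symmetric] using L4 by (simp add: field_simps)
    thus ?thesis unfolding u_def uu_def L_def by simp
  qed
  note rf = realfacts[OF L4 aL ka ua]
  have PI: "a < real m \<and> real m \<le> k" if "epoch_of n m = Some i" for m
    using epoch_of_SomeD[OF that] unfolding in_epoch_def a_def k_def by auto
  have pos: "real m - uu n i - 1 > 0" if "epoch_of n m = Some i" for m
    using PI[OF that] rf(2) unfolding u_def by linarith
  define F where "F = (\<Sum>m=1..n. if epoch_of n m = Some i then 1 / (real m - uu n i - 1) else 0)"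
  have RB: "(\<integral>\<^sup>+r. ennreal (real r) \<partial>measure_pmf (run n i gs obs n {1..n} {} None s)) \<le> ennreal F" for s
    unfolding F_def by (rule run_bound) (use rf(1) pos in \<open>auto simp: u_def\<close>)
  have "F \<le> ln (max (min (real n) k - u - 1) (a - 2 - u)) - ln (a - 2 - u)"
    unfolding F_def u_def by (rule tele) (use rf(2) PI in \<open>auto simp: u_def\<close>)
  also have "\<dots> \<le> ln (k - u - 1) - ln (a - 2 - u)"
    using rf by (intro diff_right_mono ln_mono) (auto simp: max_def min_def)
  also have "ln (k - u - 1) \<le> ln ((L + 3) * (a - 2 - u))"
    using rf by (intro ln_mono) auto
  also have "ln ((L + 3) * (a - 2 - u)) = ln (L + 3) + ln (a - 2 - u)"
    using rf L4 by (simp add: ln_mult)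
  finally have FL: "F \<le> ln (L + 3)" by simp
  have "(\<integral>\<^sup>+r. ennreal (real r) \<partial>measure_pmf (correct_in_epoch n i init gs obs)) \<le> (\<integral>\<^sup>+s. ennreal F \<partial>measure_pmf init)"
    unfolding correct_in_epoch_def nn_integral_bind_pmf by (intro nn_integral_mono RB)
  also have "\<dots> = ennreal F" by (simp add: measure_pmf.emeasure_space_1)
  also have "\<dots> \<le> ennreal (ln (L + 3))" using FL by (intro ennreal_leI)
  finally have NN: "(\<integral>\<^sup>+r. ennreal (real r) \<partial>measure_pmf (correct_in_epoch n i init gs obs)) \<le> ennreal (ln (L + 3))" .
  have "measure_pmf.expectation (correct_in_epoch n i init gs obs) real
      = enn2real (\<integral>\<^sup>+r. ennreal (real r) \<partial>measure_pmf (correct_in_epoch n i init gs obs))"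
    by (rule integral_eq_nn_integral) auto
  also have "\<dots> \<le> ln (L + 3)" using NN L4 by (intro enn2real_leI) auto
  finally show ?thesis by (simp add: L_def)
qed

end
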